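(* Let $v_1,\dots,v_{d+1}$ be the vertices of a $d$-simplex in general position. Let $1\le i\le d$, let $(\Gamma,\Delta)$ be a partition of $[d]=\{1,\dots,d\}$ with $|\Gamma|=i$, let $\delta=(\delta(1),\dots,\delta(d-i))$ be a fixed ordering of $\Delta$ and $\gamma=(\gamma(1),\dots,\gamma(i))$ a fixed ordering of $\Gamma$. Let $\tilde{\mathfrak S}_{d,\delta}$ be the set of permutations of $[d]$ whose one-line notation is $(\gamma'(1),\dots,\gamma'(i),\delta(1),\dots,\delta(d-i))$ for some ordering $\gamma'$ of $\Gamma$, and let $(\gamma,\delta)$ denote the permutation $(\gamma(1),\dots,\gamma(i),\delta(1),\dots,\delta(d-i))$. Then $$\sum_{\sigma\in\tilde{\mathfrak S}_{d,\delta}}\operatorname{sign}(\sigma)\prod_{j=1}^i\hat z(\sigma,j)=(-1)^{i(i-1)/2}\operatorname{sign}((\gamma,\delta))\det\hat X((\gamma,\delta),i).$$ In particular, $\sum_{\sigma\in\mathfrak S_d}\operatorname{sign}(\sigma)\prod_{j=1}^d\hat z(\sigma,j)=(-1)^{d(d-1)/2}\det\hat X(\mathbf 1,d)$.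
   Context: Write $v_i=(x_{i,1},\dots,x_{i,d})$ and $\hat x_{r,c}=x_{r,c}-x_{d+1,c}$. $\pi^{(j)}$ forgets the last $j$ coordinates; general position means that for every $0\le k\le d-1$ and every $(k+1)$-subset $U$ of the vertices, $\pi^{(d-k)}(\mathrm{conv}(U))$ is a $k$-simplex. For $\sigma\in\mathfrak S_d$, $1\le k\le d$: $\hat X(\sigma,k)$ is the $k\times k$ matrix with entries $\hat x_{\sigma(r),c}$ ($1\le r,c\le k$); $\hat Y(\sigma,k)$ is the $k\times k$ matrix with rows $(1,\hat x_{\sigma(r),1},\dots,\hat x_{\sigma(r),k-1})$; $\hat z(\sigma,k)=\det\hat X(\sigma,k)/\det\hat Y(\sigma,k)$. $\mathbf 1$ is the identity permutation; $\operatorname{sign}(\sigma)$ is the sign of the permutation. *)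

theory Defs
  imports "Jordan_Normal_Form.Determinant" "HOL-Combinatorics.Permutations"
begin

text \<open>Points of R^d are represented as functions nat => real whose coordinates are
  indexed by 1..d (all other coordinates are 0). The raw data is
  x r c = x_{r,c}, for vertices r in 1..d+1 and coordinates c in 1..d.\<close>

definition point :: "nat \<Rightarrow> (nat \<Rightarrow> nat \<Rightarrow> real) \<Rightarrow> nat \<Rightarrow> (nat \<Rightarrow> real)" where
  "point d x r = (\<lambda>c. if 1 \<le> c \<and> c \<le> d then x r c else 0)"

definition proj :: "nat \<Rightarrow> nat \<Rightarrow> (nat \<Rightarrow> real) \<Rightarrow> (nat \<Rightarrow> real)" where
  "proj d j p = (\<lambda>c. if c \<le> d - j then p c else 0)"

definition convhull :: "(nat \<Rightarrow> real) set \<Rightarrow> (nat \<Rightarrow> real) set" where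
  "convhull C = {y. \<exists>u. (\<forall>p\<in>C. 0 \<le> u p) \<and> (\<Sum>p\<in>C. u p) = 1 \<and>
                        y = (\<lambda>c. \<Sum>p\<in>C. u p * p c)}"

definition aff_indep :: "(nat \<Rightarrow> real) set \<Rightarrow> bool" where
  "aff_indep C \<longleftrightarrow> finite C \<and>
     (\<forall>u. (\<Sum>p\<in>C. u p) = 0 \<and> (\<lambda>c. \<Sum>p\<in>C. u p * p c) = (\<lambda>c. 0) \<longrightarrow> (\<forall>p\<in>C. u p = 0))"

definition is_simplex :: "nat \<Rightarrow> (nat \<Rightarrow> real) set \<Rightarrow> bool" where
  "is_simplex k S \<longleftrightarrow> (\<exists>C. aff_indep C \<and> card C = k + 1 \<and> S = convhull C)"

definition general_position :: "nat \<Rightarrow> (nat \<Rightarrow> nat \<Rightarrow> real) \<Rightarrow> bool" where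
  "general_position d x \<longleftrightarrow>
     (\<forall>k U. k \<le> d - 1 \<and> U \<subseteq> {1..d+1} \<and> card U = k + 1 \<longrightarrow>
        is_simplex k (proj d (d - k) ` convhull (point d x ` U)))"

definition xhat :: "nat \<Rightarrow> (nat \<Rightarrow> nat \<Rightarrow> real) \<Rightarrow> nat \<Rightarrow> nat \<Rightarrow> real" where
  "xhat d x r c = x r c - x (d + 1) c"

text \<open>Matrices are 0-indexed in Jordan_Normal_Form: entry (r,c) below is the
  paper's entry (r+1,c+1).\<close>
definition Xhat :: "nat \<Rightarrow> (nat \<Rightarrow> nat \<Rightarrow> real) \<Rightarrow> (nat \<Rightarrow> nat) \<Rightarrow> nat \<Rightarrow> real mat" where
  "Xhat d x \<sigma> k = mat k k (\<lambda>(r, c). xhat d x (\<sigma> (r + 1)) (c + 1))"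

definition Yhat :: "nat \<Rightarrow> (nat \<Rightarrow> nat \<Rightarrow> real) \<Rightarrow> (nat \<Rightarrow> nat) \<Rightarrow> nat \<Rightarrow> real mat" where
  "Yhat d x \<sigma> k = mat k k (\<lambda>(r, c). if c = 0 then 1 else xhat d x (\<sigma> (r + 1)) c)"

definition zhat :: "nat \<Rightarrow> (nat \<Rightarrow> nat \<Rightarrow> real) \<Rightarrow> (nat \<Rightarrow> nat) \<Rightarrow> nat \<Rightarrow> real" where
  "zhat d x \<sigma> k = det (Xhat d x \<sigma> k) / det (Yhat d x \<sigma> k)"

definition concat_perm :: "nat \<Rightarrow> nat \<Rightarrow> (nat \<Rightarrow> nat) \<Rightarrow> (nat \<Rightarrow> nat) \<Rightarrow> nat \<Rightarrow> nat" where
  "concat_perm d i \<gamma> \<delta> = (\<lambda>j. if 1 \<le> j \<and> j \<le> i then \<gamma> j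
                             else if i < j \<and> j \<le> d then \<delta> (j - i) else j)"

definition perms_delta :: "nat \<Rightarrow> nat \<Rightarrow> (nat \<Rightarrow> nat) \<Rightarrow> (nat \<Rightarrow> nat) set" where
  "perms_delta d i \<delta> = {\<sigma>. \<sigma> permutes {1..d} \<and> (\<forall>j. i < j \<and> j \<le> d \<longrightarrow> \<sigma> j = \<delta> (j - i))}"

end

theory Submission
  imports Defs
begin

lemma shift_perm:
  assumes "\<rho> permutes {1..n}"
  shows "(\<lambda>i. \<rho> (Suc i) - 1) permutes {0..<n} \<and> sign (\<lambda>i. \<rho> (Suc i) - 1) = sign \<rho>"
  using assms finite_atLeastAtMost
proof (induction rule: permutes_induct)
  case id
  then show ?case by (simp add: id_def[symmetric])
next
  case (swap a b p)
  have pv: "p (Suc i) \<ge> 1" for i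
    using swap.hyps(4) by (metis One_nat_def Suc_le_mono atLeastAtMost_iff le0 permutes_in_image permutes_not_in)
  have eq: "(\<lambda>i. (Transposition.transpose a b \<circ> p) (Suc i) - 1)
      = Transposition.transpose (a - 1) (b - 1) \<circ> (\<lambda>i. p (Suc i) - 1)"
  proof
    fix i
    have "p (Suc i) \<ge> 1" by (rule pv)
    then show "(Transposition.transpose a b \<circ> p) (Suc i) - 1
      = (Transposition.transpose (a - 1) (b - 1) \<circ> (\<lambda>i. p (Suc i) - 1)) i"
      using swap.hyps(1,2) by (auto simp: Transposition.transpose_def)
  qed
  have ab: "a - 1 \<in> {0..<n}" "b - 1 \<in> {0..<n}" "a - 1 \<noteq> b - 1" using swap.hyps(1,2,3) by auto
  have pp: "(\<lambda>i. p (Suc i) - 1) permutes {0..<n}" using swap.IH by blast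
  show ?case unfolding eq
  proof
    show "Transposition.transpose (a - 1) (b - 1) \<circ> (\<lambda>i. p (Suc i) - 1) permutes {0..<n}"
      by (rule permutes_compose[OF pp permutes_swap_id[OF ab(1,2)]])
    have "sign (Transposition.transpose (a - 1) (b - 1) \<circ> (\<lambda>i. p (Suc i) - 1))
       = sign (Transposition.transpose (a - 1) (b - 1)) * sign (\<lambda>i. p (Suc i) - 1)"
      apply (rule sign_compose)
      using permutes_swap_id[OF ab(1,2)] pp finite_atLeastLessThan unfolding permutation_permutes by blast+
    also have "\<dots> = sign (Transposition.transpose a b) * sign p"
      using swap.IH ab(3) swap.hyps(3) by (simp add: sign_swap_id)
    also have "\<dots> = sign (Transposition.transpose a b \<circ> p)"
      apply (rule sign_compose[symmetric])
      using permutes_swap_id[OF swap.hyps(1,2)] swap.hyps(4) finite_atLeastAtMost unfolding permutation_permutes by blast+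
    finally show "sign (Transposition.transpose (a - 1) (b - 1) \<circ> (\<lambda>i. p (Suc i) - 1)) = sign (Transposition.transpose a b \<circ> p)" .
  qed
qed

lemma Xhat_carrier[simp]: "Xhat d x h k \<in> carrier_mat k k"
  by (simp add: Xhat_def)

lemma Yhat_carrier[simp]: "Yhat d x h k \<in> carrier_mat k k"
  by (simp add: Yhat_def)

lemma det_Xhat_perm:
  assumes "\<rho> permutes {1..k}"
  shows "det (Xhat d x (h \<circ> \<rho>) k) = of_int (sign \<rho>) * det (Xhat d x h k)"
proof -
  let ?p = "\<lambda>i. \<rho> (Suc i) - 1"
  have sp: "?p permutes {0..<k}" "sign ?p = sign \<rho>" using shift_perm[OF assms] by auto
  have pv: "\<rho> (Suc i) \<ge> 1" for i
    using assms by (metis One_nat_def Suc_le_mono atLeastAtMost_iff le0 permutes_in_image permutes_not_in)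
  have pk: "\<rho> (Suc i) - Suc 0 < k" if "i < k" for i using permutes_in_image[OF sp(1)] that by auto
  have pv2: "Suc (\<rho> (Suc i) - Suc 0) = \<rho> (Suc i)" for i using pv[of i] by simp
  have "mat k k (\<lambda>(i,j). Xhat d x h k $$ (?p i, j)) = Xhat d x (h \<circ> \<rho>) k"
    by (rule eq_matI) (auto simp: Xhat_def pk pv2)
  then show ?thesis using det_permute_rows[OF Xhat_carrier sp(1), of d x h] sp(2) by simp
qed

lemma det_Yhat_perm:
  assumes "\<rho> permutes {1..k}"
  shows "det (Yhat d x (h \<circ> \<rho>) k) = of_int (sign \<rho>) * det (Yhat d x h k)"
proof -
  let ?p = "\<lambda>i. \<rho> (Suc i) - 1"
  have sp: "?p permutes {0..<k}" "sign ?p = sign \<rho>" using shift_perm[OF assms] by auto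
  have pv: "\<rho> (Suc i) \<ge> 1" for i
    using assms by (metis One_nat_def Suc_le_mono atLeastAtMost_iff le0 permutes_in_image permutes_not_in)
  have pk: "\<rho> (Suc i) - Suc 0 < k" if "i < k" for i using permutes_in_image[OF sp(1)] that by auto
  have pv2: "Suc (\<rho> (Suc i) - Suc 0) = \<rho> (Suc i)" for i using pv[of i] by simp
  have "mat k k (\<lambda>(i,j). Yhat d x h k $$ (?p i, j)) = Yhat d x (h \<circ> \<rho>) k"
    by (rule eq_matI) (auto simp: Yhat_def pk pv2)
  then show ?thesis using det_permute_rows[OF Yhat_carrier sp(1), of d x h] sp(2) by simp
qed

lemma zhat_perm:
  assumes "\<rho> permutes {1..k}"
  shows "zhat d x (h \<circ> \<rho>) k = zhat d x h k"
proof -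
  have s: "(of_int (sign \<rho>) :: real) \<noteq> 0" by (simp add: sign_def)
  show ?thesis unfolding zhat_def det_Xhat_perm[OF assms] det_Yhat_perm[OF assms]
    using s by simp
qed

definition kap :: "nat \<Rightarrow> nat \<Rightarrow> nat \<Rightarrow> nat" where
  "kap n r = (\<lambda>a. if a \<le> r then a else if a \<le> n then Suc a else if a = Suc n then Suc r else a)"

lemma kap_props:
  "r \<le> n \<Longrightarrow> kap n r permutes {1..Suc n} \<and> sign (kap n r) = (-1) ^ (n - r)"
proof (induction "n - r" arbitrary: r)
  case 0
  then have "kap n r = id" by (auto simp: kap_def fun_eq_iff)
  then show ?case using 0 permutes_id[of "{1..Suc n}"] by (simp add: id_def)
next
  case (Suc m)
  then have r: "r < n" "m = n - Suc r" by auto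
  have IH: "kap n (Suc r) permutes {1..Suc n} \<and> sign (kap n (Suc r)) = (-1) ^ (n - Suc r)"
    using Suc r by auto
  have eq: "kap n r = Transposition.transpose (Suc r) (Suc (Suc r)) \<circ> kap n (Suc r)"
    using r by (auto simp: kap_def fun_eq_iff Transposition.transpose_def)
  have t: "Transposition.transpose (Suc r) (Suc (Suc r)) permutes {1..Suc n}"
    by (rule permutes_swap_id) (use r in auto)
  have "sign (kap n r) = sign (Transposition.transpose (Suc r) (Suc (Suc r))) * sign (kap n (Suc r))"
    unfolding eq apply (rule sign_compose)
    using t IH finite_atLeastAtMost unfolding permutation_permutes by blast+
  also have "\<dots> = (-1) ^ (n - r)"
  proof -
    have "n - r = Suc (n - Suc r)" using r by simp
    then show ?thesis using IH by (simp add: sign_swap_id)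
  qed
  finally show ?case using permutes_compose[OF conjunct1[OF IH] t] eq by simp
qed

lemma laplace_Yhat:
  "det (Yhat d x g (Suc n)) = (\<Sum>r<Suc n. (-1) ^ r * det (Xhat d x (g \<circ> kap n r) n))"
proof -
  have "det (Yhat d x g (Suc n)) = (\<Sum>r<Suc n. Yhat d x g (Suc n) $$ (r,0) * cofactor (Yhat d x g (Suc n)) r 0)"
    by (rule laplace_expansion_column) auto
  also have "\<dots> = (\<Sum>r<Suc n. (-1) ^ r * det (Xhat d x (g \<circ> kap n r) n))"
  proof (rule sum.cong[OF refl])
    fix r assume r: "r \<in> {..<Suc n}"
    have "mat_delete (Yhat d x g (Suc n)) r 0 = Xhat d x (g \<circ> kap n r) n"
      by (rule eq_matI) (auto simp: mat_delete_def Yhat_def Xhat_def kap_def)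
    then show "Yhat d x g (Suc n) $$ (r,0) * cofactor (Yhat d x g (Suc n)) r 0 = (-1) ^ r * det (Xhat d x (g \<circ> kap n r) n)"
      using r by (simp add: cofactor_def Yhat_def)
  qed
  finally show ?thesis .
qed

lemma perm_of_kap:
  assumes r: "r \<le> n" and \<rho>: "\<rho> permutes {1..n}"
  shows "kap n r \<circ> \<rho> permutes {1..Suc n}"
proof -
  have "\<rho> permutes {1..Suc n}" by (rule permutes_subset[OF \<rho>]) auto
  then show ?thesis using kap_props[OF r] permutes_compose by blast
qed

lemma perm_decomp:
  "bij_betw (\<lambda>(r,\<rho>). kap n r \<circ> \<rho>) ({..n} \<times> {\<rho>. \<rho> permutes {1..n}}) {\<tau>. \<tau> permutes {1..Suc n}}"
proof (rule bij_betw_byWitness[where f'="\<lambda>\<tau>. (\<tau> (Suc n) - 1, Hilbert_Choice.inv (kap n (\<tau> (Suc n) - 1)) \<circ> \<tau>)"])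
  show "\<forall>a\<in>{..n} \<times> {\<rho>. \<rho> permutes {1..n}}.
      (\<lambda>\<tau>. (\<tau> (Suc n) - 1, Hilbert_Choice.inv (kap n (\<tau> (Suc n) - 1)) \<circ> \<tau>)) ((\<lambda>(r,\<rho>). kap n r \<circ> \<rho>) a) = a"
  proof
    fix a assume a: "a \<in> {..n} \<times> {\<rho>. \<rho> permutes {1..n}}"
    obtain r \<rho> where ar: "a = (r, \<rho>)" "r \<le> n" "\<rho> permutes {1..n}" using a by auto
    have "\<rho> (Suc n) = Suc n" using ar(3) by (simp add: permutes_not_in)
    then have e: "(kap n r \<circ> \<rho>) (Suc n) = Suc r" using ar(2) by (simp add: kap_def)
    have "Hilbert_Choice.inv (kap n r) \<circ> (kap n r \<circ> \<rho>) = \<rho>"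
      using permutes_inv_o(2)[OF conjunct1[OF kap_props[OF ar(2)]]] by (simp add: o_assoc)
    then show "(\<lambda>\<tau>. (\<tau> (Suc n) - 1, Hilbert_Choice.inv (kap n (\<tau> (Suc n) - 1)) \<circ> \<tau>)) ((\<lambda>(r,\<rho>). kap n r \<circ> \<rho>) a) = a"
      using ar e by simp
  qed
  show "\<forall>a'\<in>{\<tau>. \<tau> permutes {1..Suc n}}.
      (\<lambda>(r,\<rho>). kap n r \<circ> \<rho>) ((\<lambda>\<tau>. (\<tau> (Suc n) - 1, Hilbert_Choice.inv (kap n (\<tau> (Suc n) - 1)) \<circ> \<tau>)) a') = a'"
  proof
    fix \<tau> assume "\<tau> \<in> {\<tau>. \<tau> permutes {1..Suc n}}"
    then have t: "\<tau> permutes {1..Suc n}" by simp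
    have "\<tau> (Suc n) \<in> {1..Suc n}" using permutes_in_image[OF t] by simp
    then have r: "\<tau> (Suc n) - 1 \<le> n" by auto
    have "kap n (\<tau> (Suc n) - 1) \<circ> (Hilbert_Choice.inv (kap n (\<tau> (Suc n) - 1)) \<circ> \<tau>) = \<tau>"
      using permutes_inv_o(1)[OF conjunct1[OF kap_props[OF r]]] by (simp add: o_assoc)
    then show "(\<lambda>(r,\<rho>). kap n r \<circ> \<rho>) ((\<lambda>\<tau>. (\<tau> (Suc n) - 1, Hilbert_Choice.inv (kap n (\<tau> (Suc n) - 1)) \<circ> \<tau>)) \<tau>) = \<tau>"
      by simp
  qed
  show "(\<lambda>(r,\<rho>). kap n r \<circ> \<rho>) ` ({..n} \<times> {\<rho>. \<rho> permutes {1..n}}) \<subseteq> {\<tau>. \<tau> permutes {1..Suc n}}"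
    using perm_of_kap by auto
  show "(\<lambda>\<tau>. (\<tau> (Suc n) - 1, Hilbert_Choice.inv (kap n (\<tau> (Suc n) - 1)) \<circ> \<tau>)) ` {\<tau>. \<tau> permutes {1..Suc n}} \<subseteq> {..n} \<times> {\<rho>. \<rho> permutes {1..n}}"
  proof
    fix y assume "y \<in> (\<lambda>\<tau>. (\<tau> (Suc n) - 1, Hilbert_Choice.inv (kap n (\<tau> (Suc n) - 1)) \<circ> \<tau>)) ` {\<tau>. \<tau> permutes {1..Suc n}}"
    then obtain \<tau> where t: "\<tau> permutes {1..Suc n}" and y: "y = (\<tau> (Suc n) - 1, Hilbert_Choice.inv (kap n (\<tau> (Suc n) - 1)) \<circ> \<tau>)" by auto
    have "\<tau> (Suc n) \<in> {1..Suc n}" using permutes_in_image[OF t] by simp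
    then have r: "\<tau> (Suc n) - 1 \<le> n" and sr: "Suc (\<tau> (Suc n) - 1) = \<tau> (Suc n)" by auto
    define k where "k = kap n (\<tau> (Suc n) - 1)"
    have kp: "k permutes {1..Suc n}" using kap_props[OF r] k_def by simp
    have "k (Suc n) = \<tau> (Suc n)" using sr r by (simp add: k_def kap_def)
    then have fix1: "(Hilbert_Choice.inv k \<circ> \<tau>) (Suc n) = Suc n" using permutes_inv_eq[OF kp] by simp
    have p1: "Hilbert_Choice.inv k \<circ> \<tau> permutes insert (Suc n) {1..n}"
      using permutes_compose[OF t permutes_inv[OF kp]] by (simp add: atLeastAtMostSuc_conv)
    have "Transposition.transpose (Suc n) ((Hilbert_Choice.inv k \<circ> \<tau>) (Suc n)) \<circ> (Hilbert_Choice.inv k \<circ> \<tau>) permutes {1..n}"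
      by (rule permutes_insert_lemma[OF p1])
    then have "Hilbert_Choice.inv k \<circ> \<tau> permutes {1..n}" using fix1 by simp
    then show "y \<in> {..n} \<times> {\<rho>. \<rho> permutes {1..n}}" using y r k_def by simp
  qed
qed

lemma tri_step: "Suc n * (Suc n - 1) div 2 = n * (n - 1) div 2 + n"
proof (cases n)
  case 0 then show ?thesis by simp
next
  case (Suc m)
  have "Suc n * (Suc n - 1) = n * (n - 1) + 2 * n" using Suc by (simp add: algebra_simps)
  then show ?thesis by simp
qed

lemma main_F:
  assumes ND: "\<And>h j. inj_on h {1..j} \<Longrightarrow> h ` {1..j} \<subseteq> {1..d} \<Longrightarrow> 1 \<le> j \<Longrightarrow> j \<le> d \<Longrightarrow> det (Yhat d x h j) \<noteq> 0"
  shows "n \<le> d \<Longrightarrow> inj_on g {1..n} \<Longrightarrow> g ` {1..n} \<subseteq> {1..d} \<Longrightarrow>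
    (\<Sum>\<tau> | \<tau> permutes {1..n}. of_int (sign \<tau>) * (\<Prod>j=1..n. zhat d x (g \<circ> \<tau>) j))
      = (-1) ^ (n * (n - 1) div 2) * det (Xhat d x g n)"
proof (induction n arbitrary: g)
  case 0
  have "Xhat d x g 0 = 1\<^sub>m 0" by (rule eq_matI) (auto simp: Xhat_def)
  then show ?case by simp
next
  case (Suc n)
  let ?F = "\<lambda>\<tau>. (of_int (sign \<tau>) :: real) * (\<Prod>j=1..Suc n. zhat d x (g \<circ> \<tau>) j)"
  let ?P = "{\<rho>. \<rho> permutes {1..n}}"
  let ?c = "(-1) ^ (n * (n - 1) div 2) :: real"
  let ?z = "zhat d x g (Suc n)"
  have IH: "(\<Sum>\<rho>\<in>?P. of_int (sign \<rho>) * (\<Prod>j=1..n. zhat d x ((g \<circ> kap n r) \<circ> \<rho>) j))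
      = ?c * det (Xhat d x (g \<circ> kap n r) n)" if r: "r \<le> n" for r
  proof (rule Suc.IH)
    show "n \<le> d" using Suc.prems by simp
    have kp: "kap n r permutes {1..Suc n}" using kap_props[OF r] by blast
    have ki: "kap n r ` {1..n} \<subseteq> {1..Suc n}"
      by (auto simp: kap_def)
    have "inj_on (kap n r) {1..n}" using permutes_inj_on[OF kp] by blast
    then show "inj_on (g \<circ> kap n r) {1..n}"
      using comp_inj_on inj_on_subset[OF Suc.prems(2) ki] by blast
    show "(g \<circ> kap n r) ` {1..n} \<subseteq> {1..d}" using ki Suc.prems(3) by (auto simp: image_subset_iff)
  qed
  have trm: "?F (kap n r \<circ> \<rho>) = (-1) ^ (n - r) * ?z *
      (of_int (sign \<rho>) * (\<Prod>j=1..n. zhat d x ((g \<circ> kap n r) \<circ> \<rho>) j))"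
    if r: "r \<le> n" and \<rho>: "\<rho> permutes {1..n}" for r \<rho>
  proof -
    have kp: "kap n r permutes {1..Suc n}" and ks: "sign (kap n r) = (-1) ^ (n - r)" using kap_props[OF r] by blast+
    have "sign (kap n r \<circ> \<rho>) = sign (kap n r) * sign \<rho>"
      apply (rule sign_compose)
      using kp \<rho> finite_atLeastAtMost unfolding permutation_permutes by blast+
    moreover have "zhat d x (g \<circ> (kap n r \<circ> \<rho>)) (Suc n) = ?z"
      by (rule zhat_perm[OF perm_of_kap[OF r \<rho>]])
    ultimately show ?thesis using ks by (simp add: o_assoc)
  qed
  have "(\<Sum>\<tau> | \<tau> permutes {1..Suc n}. ?F \<tau>) = (\<Sum>p\<in>{..n} \<times> ?P. ?F ((\<lambda>(r,\<rho>). kap n r \<circ> \<rho>) p))"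
    by (rule sum.reindex_bij_betw[OF perm_decomp, symmetric])
  also have "\<dots> = (\<Sum>r\<in>{..n}. \<Sum>\<rho>\<in>?P. ?F (kap n r \<circ> \<rho>))"
    by (simp add: sum.cartesian_product split_def)
  also have "\<dots> = (\<Sum>r\<in>{..n}. (-1) ^ (n - r) * ?z * (?c * det (Xhat d x (g \<circ> kap n r) n)))"
  proof (rule sum.cong[OF refl])
    fix r assume r: "r \<in> {..n}"
    have "(\<Sum>\<rho>\<in>?P. ?F (kap n r \<circ> \<rho>)) = (\<Sum>\<rho>\<in>?P. (-1) ^ (n - r) * ?z *
      (of_int (sign \<rho>) * (\<Prod>j=1..n. zhat d x ((g \<circ> kap n r) \<circ> \<rho>) j)))"
      using trm r by (intro sum.cong) auto
    also have "\<dots> = (-1) ^ (n - r) * ?z * (?c * det (Xhat d x (g \<circ> kap n r) n))"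
      using IH r by (simp add: sum_distrib_left[symmetric])
    finally show "(\<Sum>\<rho>\<in>?P. ?F (kap n r \<circ> \<rho>)) = (-1) ^ (n - r) * ?z * (?c * det (Xhat d x (g \<circ> kap n r) n))" .
  qed
  also have "\<dots> = (-1) ^ n * ?z * ?c * (\<Sum>r<Suc n. (-1) ^ r * det (Xhat d x (g \<circ> kap n r) n))"
  proof -
    have "(-1) ^ (n - r) = ((-1) ^ n * (-1) ^ r :: real)" if "r \<le> n" for r
    proof -
      have "(-1) ^ n = ((-1) ^ (n - r) * (-1) ^ r :: real)" using that by (simp flip: power_add)
      have s: "(-1::real) ^ r * (-1) ^ r = 1" by (simp flip: power_add add: mult_2[symmetric])
      have "(-1) ^ n * (-1) ^ r = ((-1) ^ (n - r) * ((-1) ^ r * (-1) ^ r) :: real)"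
        using \<open>(-1) ^ n = ((-1) ^ (n - r) * (-1) ^ r :: real)\<close> by (simp add: mult.assoc)
      then show ?thesis using s by simp
    qed
    then show ?thesis by (simp add: sum_distrib_left lessThan_Suc_atMost algebra_simps)
  qed
  also have "\<dots> = (-1) ^ n * ?c * (?z * det (Yhat d x g (Suc n)))"
    by (simp add: laplace_Yhat)
  also have "?z * det (Yhat d x g (Suc n)) = det (Xhat d x g (Suc n))"
    using ND[OF Suc.prems(2,3)] Suc.prems(1) by (simp add: zhat_def)
  finally have A: "(\<Sum>\<tau> | \<tau> permutes {1..Suc n}. ?F \<tau>) = (-1) ^ n * ?c * det (Xhat d x g (Suc n))" .
  have E: "(-1::real) ^ (Suc n * (Suc n - 1) div 2) = (-1) ^ n * ?c"
    unfolding tri_step power_add by (simp add: mult.commute)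
  show ?case using A E by (simp only: mult.assoc)
qed

lemma ND_gp:
  assumes gp: "general_position d x" and dv: "inj_on (point d x) {1..d+1}"
    and h: "inj_on h {1..j}" "h ` {1..j} \<subseteq> {1..d}" and j: "1 \<le> j" "j \<le> d"
  shows "det (Yhat d x h j) \<noteq> 0"
proof
  assume det0: "det (Yhat d x h j) = 0"
  define k where "k = j - 1"
  have kj: "k + 1 = j" "k \<le> d - 1" "d - (d - k) = k" using j by (auto simp: k_def)
  define U where "U = h ` {1..j}"
  have cardU: "card U = k + 1" using card_image[OF h(1)] kj by (simp add: U_def)
  have Usub: "U \<subseteq> {1..d+1}" using h(2) by (auto simp: U_def)
  have "is_simplex k (proj d (d - k) ` convhull (point d x ` U))"
    using gp kj(2) Usub cardU unfolding general_position_def by blast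
  then obtain C where C: "aff_indep C" "card C = j" "proj d (d - k) ` convhull (point d x ` U) = convhull C"
    unfolding is_simplex_def using kj by auto
  have finC: "finite C" using C(1) by (simp add: aff_indep_def)
  obtain e where e: "bij_betw e {0..<j} C" using ex_bij_betw_nat_finite[OF finC] C(2) by auto
  have CsubH: "C \<subseteq> convhull C"
  proof
    fix c assume c: "c \<in> C"
    show "c \<in> convhull C" unfolding convhull_def
    proof (intro CollectI exI[of _ "\<lambda>p. if p = c then 1 else 0"] conjI)
      show "\<forall>p\<in>C. 0 \<le> (if p = c then 1 else (0::real))" by simp
      show "(\<Sum>p\<in>C. if p = c then 1 else (0::real)) = 1" using c finC by simp
      show "c = (\<lambda>m. \<Sum>p\<in>C. (if p = c then 1 else 0) * p m)"
      proof
        fix m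
        have "(\<Sum>p\<in>C. (if p = c then 1 else 0) * p m) = (\<Sum>p\<in>C. if p = c then c m else 0)"
          by (rule sum.cong) auto
        then show "c m = (\<Sum>p\<in>C. (if p = c then 1 else 0) * p m)" using c finC by simp
      qed
    qed
  qed
  define q where "q = (\<lambda>r. point d x (h (Suc r)))"
  have Suc_img: "{1..j} = Suc ` {0..<j}"
    by (simp add: image_Suc_atLeastLessThan atLeastLessThanSuc_atLeastAtMost)
  have P_eq: "point d x ` U = q ` {0..<j}" unfolding U_def q_def Suc_img by (simp only: image_image)
  have hSuc: "h (Suc r) \<in> {1..d}" if "r < j" for r using h(2) that by (auto simp: image_subset_iff)
  have qinj: "inj_on q {0..<j}"
  proof (rule inj_onI)
    fix a b assume ab: "a \<in> {0..<j}" "b \<in> {0..<j}" "q a = q b"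
    have m: "h (Suc a) \<in> {1..d+1}" "h (Suc b) \<in> {1..d+1}" using hSuc[of a] hSuc[of b] ab(1,2) by auto
    have "h (Suc a) = h (Suc b)"
      by (rule inj_onD[OF dv ab(3)[unfolded q_def] m])
    then show "a = b" using inj_onD[OF h(1)] ab(1,2) by force
  qed
  have reidx: "(\<Sum>p\<in>point d x ` U. f p) = (\<Sum>r\<in>{0..<j}. f (q r))" for f :: "(nat \<Rightarrow> real) \<Rightarrow> real"
    unfolding P_eq by (rule sum.reindex[OF qinj, unfolded comp_def])
  have "\<forall>a. \<exists>u. a < j \<longrightarrow> (\<Sum>p\<in>point d x ` U. u p) = 1 \<and>
      e a = proj d (d - k) (\<lambda>m. \<Sum>p\<in>point d x ` U. u p * p m)"
  proof
    fix a
    show "\<exists>u. a < j \<longrightarrow> (\<Sum>p\<in>point d x ` U. u p) = 1 \<and>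
      e a = proj d (d - k) (\<lambda>m. \<Sum>p\<in>point d x ` U. u p * p m)"
    proof (cases "a < j")
      case True
      then have "e a \<in> C" using e by (auto simp: bij_betw_def)
      then have "e a \<in> proj d (d - k) ` convhull (point d x ` U)" using CsubH C(3) by auto
      then obtain y where y: "y \<in> convhull (point d x ` U)" "e a = proj d (d - k) y" by blast
      then obtain u where u: "(\<Sum>p\<in>point d x ` U. u p) = 1" "y = (\<lambda>c. \<Sum>p\<in>point d x ` U. u p * p c)"
        unfolding convhull_def by blast
      show ?thesis using u y(2) by blast
    qed simp
  qed
  from choice[OF this] obtain uu where uu0: "\<forall>a. a < j \<longrightarrow> (\<Sum>p\<in>point d x ` U. uu a p) = 1 \<and>
      e a = proj d (d - k) (\<lambda>m. \<Sum>p\<in>point d x ` U. uu a p * p m)"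
    by blast
  have uu: "(\<Sum>p\<in>point d x ` U. uu a p) = 1 \<and>
      e a = proj d (d - k) (\<lambda>m. \<Sum>p\<in>point d x ` U. uu a p * p m)" if "a < j" for a
    using uu0 that by blast
  have usum: "(\<Sum>r\<in>{0..<j}. uu a (q r)) = 1" if "a < j" for a using uu[OF that] reidx by simp
  have ecoord: "e a m = (\<Sum>r\<in>{0..<j}. uu a (q r) * x (h (Suc r)) m)" if "a < j" "1 \<le> m" "m < j" for a m
  proof -
    have "e a m = (\<Sum>p\<in>point d x ` U. uu a p * p m)"
      using uu[OF that(1)] that kj by (simp add: proj_def)
    also have "\<dots> = (\<Sum>r\<in>{0..<j}. uu a (q r) * q r m)" by (rule reidx)
    also have "\<dots> = (\<Sum>r\<in>{0..<j}. uu a (q r) * x (h (Suc r)) m)"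
      using that j by (intro sum.cong) (auto simp: q_def point_def)
    finally show ?thesis .
  qed
  have ezero: "e a m = 0" if "a < j" "m = 0 \<or> j \<le> m" for a m
  proof (cases "m = 0")
    case True
    have "e a m = (\<Sum>p\<in>point d x ` U. uu a p * p m)"
      using uu[OF that(1)] True by (simp add: proj_def)
    also have "\<dots> = (\<Sum>r\<in>{0..<j}. uu a (q r) * q r m)" by (rule reidx)
    also have "\<dots> = 0" using True by (simp add: q_def point_def)
    finally show ?thesis .
  next
    case False
    then have "j \<le> m" using that by auto
    then show ?thesis using uu[OF that(1)] kj by (simp add: proj_def)
  qed
  define Wm where "Wm = mat j j (\<lambda>(a,r). uu a (q r))"
  define A where "A = mat j j (\<lambda>(a,m). if m = 0 then 1 else e a m - x (d+1) m)"
  have AWY: "A = Wm * Yhat d x h j"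
  proof (rule eq_matI)
    fix a m assume am: "a < dim_row (Wm * Yhat d x h j)" "m < dim_col (Wm * Yhat d x h j)"
    then have am': "a < j" "m < j" by (auto simp: Wm_def Yhat_def)
    have "(Wm * Yhat d x h j) $$ (a, m) = (\<Sum>r\<in>{0..<j}. uu a (q r) * (if m = 0 then 1 else xhat d x (h (Suc r)) m))"
      using am' by (simp add: Wm_def Yhat_def scalar_prod_def row_def col_def, intro sum.cong, auto)
    also have "\<dots> = A $$ (a, m)"
    proof (cases "m = 0")
      case True then show ?thesis using am' usum by (simp add: A_def)
    next
      case False
      have "(\<Sum>r\<in>{0..<j}. uu a (q r) * xhat d x (h (Suc r)) m)
          = (\<Sum>r\<in>{0..<j}. uu a (q r) * x (h (Suc r)) m) - (\<Sum>r\<in>{0..<j}. uu a (q r)) * x (d+1) m"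
        by (simp add: xhat_def algebra_simps sum_subtractf sum_distrib_right sum_distrib_left)
      also have "\<dots> = e a m - x (d+1) m" using ecoord[of a m] usum[of a] am' False by simp
      finally show ?thesis using False am' by (simp add: A_def)
    qed
    finally show "A $$ (a, m) = (Wm * Yhat d x h j) $$ (a, m)" by simp
  qed (auto simp: A_def Wm_def Yhat_def)
  have Ac: "A \<in> carrier_mat j j" by (simp add: A_def)
  have Wc: "Wm \<in> carrier_mat j j" by (simp add: Wm_def)
  have "det A = 0" unfolding AWY det_mult[OF Wc Yhat_carrier] using det0 by simp
  then have "det (transpose_mat A) = 0" using det_transpose[OF Ac] by simp
  then obtain v where v: "v \<in> carrier_vec j" "v \<noteq> 0\<^sub>v j" "transpose_mat A *\<^sub>v v = 0\<^sub>v j"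
    using det_0_iff_vec_prod_zero_field[of "transpose_mat A" j] Ac by auto
  have colsum: "(\<Sum>a\<in>{0..<j}. A $$ (a, m) * v $ a) = 0" if "m < j" for m
  proof -
    have "(transpose_mat A *\<^sub>v v) $ m = 0" using v(3) that by simp
    then show ?thesis using that v(1) Ac by (simp add: scalar_prod_def row_def col_def mult.commute)
  qed
  have vsum: "(\<Sum>a\<in>{0..<j}. v $ a) = 0" using colsum[of 0] j by (simp add: A_def)
  define u where "u = (\<lambda>p. v $ (inv_into {0..<j} e p))"
  have einj: "inj_on e {0..<j}" and eimg: "e ` {0..<j} = C" using e by (auto simp: bij_betw_def)
  have ue: "u (e a) = v $ a" if "a < j" for a using inv_into_f_f[OF einj] that by (simp add: u_def)
  have reC: "(\<Sum>p\<in>C. f p) = (\<Sum>a\<in>{0..<j}. f (e a))" for f :: "(nat \<Rightarrow> real) \<Rightarrow> real"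
    unfolding eimg[symmetric] by (rule sum.reindex[OF einj, unfolded comp_def])
  have s1: "(\<Sum>p\<in>C. u p) = 0" unfolding reC using ue vsum by simp
  have s2: "(\<lambda>c. \<Sum>p\<in>C. u p * p c) = (\<lambda>c. 0)"
  proof
    fix c
    have "(\<Sum>p\<in>C. u p * p c) = (\<Sum>a\<in>{0..<j}. v $ a * e a c)" unfolding reC using ue by simp
    also have "\<dots> = 0"
    proof (cases "c = 0 \<or> j \<le> c")
      case True then show ?thesis using ezero by simp
    next
      case False
      then have c: "1 \<le> c" "c < j" by auto
      have "(\<Sum>a\<in>{0..<j}. A $$ (a, c) * v $ a) = (\<Sum>a\<in>{0..<j}. v $ a * e a c) - x (d+1) c * (\<Sum>a\<in>{0..<j}. v $ a)"
        using c by (simp add: A_def algebra_simps sum_subtractf sum_distrib_left)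
      then show ?thesis using colsum[OF c(2)] vsum by simp
    qed
    finally show "(\<Sum>p\<in>C. u p * p c) = 0" .
  qed
  have "\<forall>p\<in>C. u p = 0" using C(1) s1 s2 unfolding aff_indep_def by blast
  then have "v $ a = 0" if "a < j" for a using ue[OF that] eimg that by auto
  then have "v = 0\<^sub>v j" using v(1) by (intro eq_vecI) auto
  then show False using v(2) by simp
qed

lemma permutes_restrict:
  assumes "p permutes T" "\<And>x. x \<notin> S \<Longrightarrow> p x = x"
  shows "p permutes S"
  using assms unfolding permutes_def by blast

theorem mainTheorem17:
  fixes d i :: nat and x :: "nat \<Rightarrow> nat \<Rightarrow> real"
    and \<Gamma> \<Delta> :: "nat set" and \<gamma> \<delta> :: "nat \<Rightarrow> nat"
  assumes simplex: "is_simplex d (convhull (point d x ` {1..d+1}))"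
    and distinct_vertices: "inj_on (point d x) {1..d+1}"
    and gp: "general_position d x"
    and i_range: "1 \<le> i" "i \<le> d"
    and partition: "\<Gamma> \<union> \<Delta> = {1..d}" "\<Gamma> \<inter> \<Delta> = {}" "card \<Gamma> = i"
    and gamma: "bij_betw \<gamma> {1..i} \<Gamma>"
    and delta: "bij_betw \<delta> {1..d-i} \<Delta>"
  shows "(\<Sum>\<sigma>\<in>perms_delta d i \<delta>. of_int (sign \<sigma>) * (\<Prod>j=1..i. zhat d x \<sigma> j))
           = (-1) ^ (i * (i - 1) div 2) * of_int (sign (concat_perm d i \<gamma> \<delta>))
             * det (Xhat d x (concat_perm d i \<gamma> \<delta>) i)
      \<and> (\<Sum>\<sigma> | \<sigma> permutes {1..d}. of_int (sign \<sigma>) * (\<Prod>j=1..d. zhat d x \<sigma> j))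
           = (-1) ^ (d * (d - 1) div 2) * det (Xhat d x id d)"
proof
  have ND: "\<And>h j. inj_on h {1..j} \<Longrightarrow> h ` {1..j} \<subseteq> {1..d} \<Longrightarrow> 1 \<le> j \<Longrightarrow> j \<le> d \<Longrightarrow> det (Yhat d x h j) \<noteq> 0"
    using ND_gp[OF gp distinct_vertices] by blast
  show "(\<Sum>\<sigma> | \<sigma> permutes {1..d}. of_int (sign \<sigma>) * (\<Prod>j=1..d. zhat d x \<sigma> j))
           = (-1) ^ (d * (d - 1) div 2) * det (Xhat d x id d)"
    using main_F[OF ND, of d id] by simp
  define cp where "cp = concat_perm d i \<gamma> \<delta>"
  have g_img: "\<gamma> ` {1..i} = \<Gamma>" using gamma by (simp add: bij_betw_def)
  have d_img: "\<delta> ` {1..d-i} = \<Delta>" using delta by (simp add: bij_betw_def)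
  have cp_img: "cp ` {1..d} = {1..d}"
  proof
    show "cp ` {1..d} \<subseteq> {1..d}"
    proof
      fix y assume "y \<in> cp ` {1..d}"
      then obtain a where a: "a \<in> {1..d}" "y = cp a" by auto
      show "y \<in> {1..d}"
      proof (cases "a \<le> i")
        case True
        then have "y = \<gamma> a" using a by (simp add: cp_def concat_perm_def)
        then show ?thesis using g_img True a partition(1) by auto
      next
        case False
        then have "y = \<delta> (a - i)" using a by (simp add: cp_def concat_perm_def)
        moreover have "a - i \<in> {1..d-i}" using False a by auto
        ultimately show ?thesis using d_img partition(1) by auto
      qed
    qed
    show "{1..d} \<subseteq> cp ` {1..d}"
    proof
      fix y assume y: "y \<in> {1..d}"
      show "y \<in> cp ` {1..d}"
      proof (cases "y \<in> \<Gamma>")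
        case True
        then obtain k where k: "k \<in> {1..i}" "y = \<gamma> k" using g_img by auto
        then have "cp k = y" by (simp add: cp_def concat_perm_def)
        then show ?thesis using k i_range by force
      next
        case False
        then have "y \<in> \<Delta>" using y partition(1) by auto
        then obtain k where k: "k \<in> {1..d-i}" "y = \<delta> k" using d_img by auto
        moreover have "k + i \<le> d" using k i_range by auto
        ultimately have "cp (k + i) = y" using i_range by (simp add: cp_def concat_perm_def)
        moreover have "k + i \<in> {1..d}" using k i_range by auto
        ultimately show ?thesis by force
      qed
    qed
  qed
  have cp_perm: "cp permutes {1..d}"
  proof (rule bij_imp_permutes)
    show "bij_betw cp {1..d} {1..d}"
      unfolding bij_betw_def using eq_card_imp_inj_on[of "{1..d}" cp] cp_img by simp
    show "cp a = a" if "a \<notin> {1..d}" for a using that i_range by (auto simp: cp_def concat_perm_def)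
  qed
  have bij: "bij_betw (\<lambda>\<rho>. cp \<circ> \<rho>) {\<rho>. \<rho> permutes {1..i}} (perms_delta d i \<delta>)"
  proof (rule bij_betw_byWitness[where f'="\<lambda>\<sigma>. Hilbert_Choice.inv cp \<circ> \<sigma>"])
    show "\<forall>a\<in>{\<rho>. \<rho> permutes {1..i}}. Hilbert_Choice.inv cp \<circ> (cp \<circ> a) = a"
      using permutes_inv_o(2)[OF cp_perm] by (simp add: o_assoc)
    show "\<forall>a\<in>perms_delta d i \<delta>. cp \<circ> (Hilbert_Choice.inv cp \<circ> a) = a"
      using permutes_inv_o(1)[OF cp_perm] by (simp add: o_assoc)
    show "(\<lambda>\<rho>. cp \<circ> \<rho>) ` {\<rho>. \<rho> permutes {1..i}} \<subseteq> perms_delta d i \<delta>"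
    proof
      fix y assume "y \<in> (\<lambda>\<rho>. cp \<circ> \<rho>) ` {\<rho>. \<rho> permutes {1..i}}"
      then obtain \<rho> where r: "\<rho> permutes {1..i}" "y = cp \<circ> \<rho>" by auto
      have "\<rho> permutes {1..d}" by (rule permutes_subset[OF r(1)]) (use i_range in auto)
      then have "y permutes {1..d}" using permutes_compose[OF _ cp_perm] r(2) by blast
      moreover have "y j = \<delta> (j - i)" if "i < j" "j \<le> d" for j
      proof -
        have "\<rho> j = j" using r(1) that by (simp add: permutes_not_in)
        then show ?thesis using r(2) that by (simp add: cp_def concat_perm_def)
      qed
      ultimately show "y \<in> perms_delta d i \<delta>" by (simp add: perms_delta_def)
    qed
    show "(\<lambda>\<sigma>. Hilbert_Choice.inv cp \<circ> \<sigma>) ` perms_delta d i \<delta> \<subseteq> {\<rho>. \<rho> permutes {1..i}}"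
    proof
      fix y assume "y \<in> (\<lambda>\<sigma>. Hilbert_Choice.inv cp \<circ> \<sigma>) ` perms_delta d i \<delta>"
      then obtain \<sigma> where s: "\<sigma> permutes {1..d}" "\<And>j. i < j \<and> j \<le> d \<Longrightarrow> \<sigma> j = \<delta> (j - i)"
        and y: "y = Hilbert_Choice.inv cp \<circ> \<sigma>" by (auto simp: perms_delta_def)
      have yp: "y permutes {1..d}" using permutes_compose[OF s(1) permutes_inv[OF cp_perm]] y by simp
      have "y a = a" if "a \<notin> {1..i}" for a
      proof (cases "a \<in> {1..d}")
        case True
        then have "i < a" "a \<le> d" using that by auto
        then have "\<sigma> a = cp a" using s(2) by (simp add: cp_def concat_perm_def)
        then show ?thesis using y permutes_inverses(2)[OF cp_perm] by simp
      next
        case False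
        then show ?thesis using permutes_not_in[OF yp] by blast
      qed
      then show "y \<in> {\<rho>. \<rho> permutes {1..i}}" using permutes_restrict[OF yp] by blast
    qed
  qed
  have cpi: "inj_on cp {1..i}" using permutes_inj_on[OF cp_perm] by (rule inj_on_subset) (use i_range in auto)
  have cpim: "cp ` {1..i} \<subseteq> {1..d}" using cp_img i_range by auto
  have "(\<Sum>\<sigma>\<in>perms_delta d i \<delta>. of_int (sign \<sigma>) * (\<Prod>j=1..i. zhat d x \<sigma> j))
      = (\<Sum>\<rho>\<in>{\<rho>. \<rho> permutes {1..i}}. of_int (sign (cp \<circ> \<rho>)) * (\<Prod>j=1..i. zhat d x (cp \<circ> \<rho>) j))"
    by (rule sum.reindex_bij_betw[OF bij, symmetric])
  also have "\<dots> = (\<Sum>\<rho>\<in>{\<rho>. \<rho> permutes {1..i}}. of_int (sign cp) * (of_int (sign \<rho>) * (\<Prod>j=1..i. zhat d x (cp \<circ> \<rho>) j)))"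
  proof (rule sum.cong[OF refl])
    fix \<rho> assume "\<rho> \<in> {\<rho>. \<rho> permutes {1..i}}"
    then have "sign (cp \<circ> \<rho>) = sign cp * sign \<rho>"
      apply (intro sign_compose)
      using cp_perm finite_atLeastAtMost unfolding permutation_permutes by blast+
    then show "of_int (sign (cp \<circ> \<rho>)) * (\<Prod>j=1..i. zhat d x (cp \<circ> \<rho>) j) = of_int (sign cp) * (of_int (sign \<rho>) * (\<Prod>j=1..i. zhat d x (cp \<circ> \<rho>) j))"
      by simp
  qed
  also have "\<dots> = of_int (sign cp) * ((-1) ^ (i * (i - 1) div 2) * det (Xhat d x cp i))"
    using main_F[OF ND i_range(2) cpi cpim] by (simp add: sum_distrib_left[symmetric])
  finally show "(\<Sum>\<sigma>\<in>perms_delta d i \<delta>. of_int (sign \<sigma>) * (\<Prod>j=1..i. zhat d x \<sigma> j))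
           = (-1) ^ (i * (i - 1) div 2) * of_int (sign (concat_perm d i \<gamma> \<delta>))
             * det (Xhat d x (concat_perm d i \<gamma> \<delta>) i)" by (simp add: cp_def)
qed

end
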